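(* For every integer $k\geq 3$ there exists a tree $T$ of order $n$ such that $\mathrm{rad}(T)>k$ and $\gamma_{B_k}(T)=\left\lceil\frac{k+2}{k+1}\cdot\frac{n}{3}\right\rceil$.
   Context: $d(u,v)$ denotes the distance in the graph; $\mathrm{rad}(T)$ is the radius. For a connected graph $G$ and an integer $k\ge 1$, a function $f\colon V(G)\to\{0,1,\dots,k\}$ is a dominating $k$-broadcast on $G$ if for every $u\in V(G)$ there is a vertex $v$ with $f(v)\geq 1$ and $d(u,v)\leq f(v)$. Its cost is $\omega(f)=\sum_{u\in V(G)}f(u)$, and the dominating $k$-broadcast number $\gamma_{B_k}(G)$ is the minimum cost of a dominating $k$-broadcast on $G$. *)

theory Defs
  imports Complex_Main
begin

definition simple_graph :: "'a set \<Rightarrow> ('a \<Rightarrow> 'a \<Rightarrow> bool) \<Rightarrow> bool" where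
  "simple_graph V E \<longleftrightarrow> finite V \<and> V \<noteq> {} \<and>
     (\<forall>u v. E u v \<longrightarrow> u \<in> V \<and> v \<in> V) \<and>
     (\<forall>u v. E u v \<longrightarrow> E v u) \<and> (\<forall>u. \<not> E u u)"

fun is_walk :: "('a \<Rightarrow> 'a \<Rightarrow> bool) \<Rightarrow> 'a list \<Rightarrow> bool" where
  "is_walk E [] = False"
| "is_walk E [x] = True"
| "is_walk E (x # y # xs) = (E x y \<and> is_walk E (y # xs))"

definition connected_graph :: "'a set \<Rightarrow> ('a \<Rightarrow> 'a \<Rightarrow> bool) \<Rightarrow> bool" where
  "connected_graph V E \<longleftrightarrow> (\<forall>u\<in>V. \<forall>v\<in>V. \<exists>p. is_walk E p \<and> hd p = u \<and> last p = v)"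

definition edge_set :: "'a set \<Rightarrow> ('a \<Rightarrow> 'a \<Rightarrow> bool) \<Rightarrow> 'a set set" where
  "edge_set V E = {{u, v} | u v. u \<in> V \<and> v \<in> V \<and> E u v}"

(* a tree: connected simple graph with |E| = |V| - 1 (equivalently connected and acyclic) *)
definition is_tree :: "'a set \<Rightarrow> ('a \<Rightarrow> 'a \<Rightarrow> bool) \<Rightarrow> bool" where
  "is_tree V E \<longleftrightarrow> simple_graph V E \<and> connected_graph V E \<and> card (edge_set V E) = card V - 1"

definition dist :: "('a \<Rightarrow> 'a \<Rightarrow> bool) \<Rightarrow> 'a \<Rightarrow> 'a \<Rightarrow> nat" where
  "dist E u v = (LEAST m. \<exists>p. is_walk E p \<and> hd p = u \<and> last p = v \<and> length p = Suc m)"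

definition eccentricity :: "'a set \<Rightarrow> ('a \<Rightarrow> 'a \<Rightarrow> bool) \<Rightarrow> 'a \<Rightarrow> nat" where
  "eccentricity V E v = Max (dist E v ` V)"

definition radius :: "'a set \<Rightarrow> ('a \<Rightarrow> 'a \<Rightarrow> bool) \<Rightarrow> nat" where
  "radius V E = Min (eccentricity V E ` V)"

definition dominating_k_broadcast ::
  "'a set \<Rightarrow> ('a \<Rightarrow> 'a \<Rightarrow> bool) \<Rightarrow> nat \<Rightarrow> ('a \<Rightarrow> nat) \<Rightarrow> bool" where
  "dominating_k_broadcast V E k f \<longleftrightarrow>
     (\<forall>v\<in>V. f v \<le> k) \<and>
     (\<forall>u\<in>V. \<exists>v\<in>V. f v \<ge> 1 \<and> dist E u v \<le> f v)"

definition broadcast_cost :: "'a set \<Rightarrow> ('a \<Rightarrow> nat) \<Rightarrow> nat" where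
  "broadcast_cost V f = (\<Sum>u\<in>V. f u)"

definition broadcast_number :: "'a set \<Rightarrow> ('a \<Rightarrow> 'a \<Rightarrow> bool) \<Rightarrow> nat \<Rightarrow> nat" where
  "broadcast_number V E k =
     (LEAST c. \<exists>f. dominating_k_broadcast V E k f \<and> broadcast_cost V f = c)"

end

theory Submission
  imports Defs
begin

lemma walk_lower:
  assumes Lip: "\<And>x y. E x y \<Longrightarrow> D x v \<le> D y v + 1" and D0: "D v v = (0::nat)"
  shows "is_walk E p \<Longrightarrow> last p = v \<Longrightarrow> D (hd p) v \<le> length p - 1"
proof (induction p)
  case Nil then show ?case by simp
next
  case (Cons x xs)
  show ?case
  proof (cases xs)
    case Nil then show ?thesis using Cons D0 by simp
  next
    case (Cons y ys)
    then have "E x y" "is_walk E xs" "last xs = v" using Cons.prems by auto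
    then have "D y v \<le> length xs - 1" using Cons.IH Cons by simp
    then show ?thesis using Lip[OF \<open>E x y\<close>] Cons by simp
  qed
qed

lemma walk_cons: "is_walk E p \<Longrightarrow> p \<noteq> [] \<Longrightarrow> E u (hd p) \<Longrightarrow> is_walk E (u # p)"
  by (cases p) auto

lemma walk_exists:
  assumes desc: "\<And>u. u \<in> V \<Longrightarrow> u \<noteq> v \<Longrightarrow> (\<exists>w. E u w \<and> D w v + 1 = D u v)"
    and Ein: "\<And>x y. E x y \<Longrightarrow> x \<in> V \<and> y \<in> V" and D0: "D v v = (0::nat)"
  shows "u \<in> V \<Longrightarrow> \<exists>p. is_walk E p \<and> hd p = u \<and> last p = v \<and> length p = Suc (D u v)"
proof (induction "D u v" arbitrary: u)
  case 0
  have "u = v"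
  proof (rule ccontr)
    assume "u \<noteq> v" then obtain w where "D w v + 1 = D u v" using desc 0 by blast
    then show False using 0 by simp
  qed
  then show ?case using 0 by (intro exI[of _ "[v]"]) auto
next
  case (Suc m)
  then have "u \<noteq> v" using D0 by auto
  then obtain w where w: "E u w" "D w v + 1 = D u v" using desc Suc by blast
  then have "w \<in> V" "m = D w v" using Ein Suc by auto
  then obtain p where p: "is_walk E p" "hd p = w" "last p = v" "length p = Suc m"
    using Suc by blast
  then have "p \<noteq> []" by auto
  then show ?case using p w Suc walk_cons[of E p u]
    by (intro exI[of _ "u # p"]) auto
qed

lemma dist_eq:
  assumes desc: "\<And>u. u \<in> V \<Longrightarrow> u \<noteq> v \<Longrightarrow> (\<exists>w. E u w \<and> D w v + 1 = D u v)"
    and Ein: "\<And>x y. E x y \<Longrightarrow> x \<in> V \<and> y \<in> V" and D0: "D v v = (0::nat)"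
    and Lip: "\<And>x y. E x y \<Longrightarrow> D x v \<le> D y v + 1"
    and uV: "u \<in> V"
  shows "dist E u v = D u v"
  unfolding dist_def
proof (rule Least_equality)
  show "\<exists>p. is_walk E p \<and> hd p = u \<and> last p = v \<and> length p = Suc (D u v)"
    using walk_exists[of V v E D, OF desc Ein D0 uV] by blast
next
  fix m assume "\<exists>p. is_walk E p \<and> hd p = u \<and> last p = v \<and> length p = Suc m"
  then obtain p where "is_walk E p" "hd p = u" "last p = v" "length p = Suc m" by blast
  then show "D u v \<le> m" using walk_lower[of E D v, OF Lip D0, of p] by auto
qed


definition VV :: "nat \<Rightarrow> nat set" where "VV k = {..3*k+2}"
definition par :: "nat \<Rightarrow> nat \<Rightarrow> nat" where
  "par k x = (if x \<le> 2*k+2 then x - 1 else 2*(x - (2*k+2)))"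
definition EE :: "nat \<Rightarrow> nat \<Rightarrow> nat \<Rightarrow> bool" where
  "EE k x y = ((x \<in> VV k - {0} \<and> y = par k x) \<or> (y \<in> VV k - {0} \<and> x = par k y))"
definition pos :: "nat \<Rightarrow> nat \<Rightarrow> nat" where
  "pos k x = (if x \<le> 2*k+2 then x else 2*(x - (2*k+2)))"
definition lf :: "nat \<Rightarrow> nat \<Rightarrow> nat" where
  "lf k x = (if x \<le> 2*k+2 then 0 else 1)"
definition DD :: "nat \<Rightarrow> nat \<Rightarrow> nat \<Rightarrow> nat" where
  "DD k u v = (if u = v then 0 else (pos k u - pos k v) + (pos k v - pos k u) + lf k u + lf k v)"
definition rk :: "nat \<Rightarrow> nat \<Rightarrow> nat" where "rk k x = 2 * pos k x + lf k x"

lemma par_in: "x \<in> VV k - {0} \<Longrightarrow> par k x \<in> VV k"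
  by (auto simp: VV_def par_def)

lemma rk_par: "x \<in> VV k - {0} \<Longrightarrow> rk k (par k x) < rk k x"
  by (auto simp: VV_def par_def rk_def pos_def lf_def)

lemma EE_in: "EE k x y \<Longrightarrow> x \<in> VV k \<and> y \<in> VV k"
  using par_in by (auto simp: EE_def)

lemma pos_le: "x \<in> VV k \<Longrightarrow> pos k x \<le> 2*k+2"
  by (auto simp: VV_def pos_def)

lemma DD_sym: "DD k u v = DD k v u"
  by (auto simp: DD_def)

lemma DD_tri: "DD k u w \<le> DD k u v + DD k v w"
  by (auto simp: DD_def)

lemma sp_facts: "x \<le> 2*k+2 \<Longrightarrow> pos k x = x \<and> lf k x = 0"
  by (auto simp: pos_def lf_def)

lemma leaf_facts: "x \<in> VV k \<Longrightarrow> \<not> x \<le> 2*k+2 \<Longrightarrow>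
    lf k x = 1 \<and> par k x = pos k x \<and> 2 \<le> pos k x \<and> pos k x \<le> 2*k \<and> pos k x \<noteq> x"
  by (auto simp: pos_def lf_def par_def VV_def)

lemma par_sp: "x \<in> VV k - {0} \<Longrightarrow> par k x \<le> 2*k+2"
  by (auto simp: VV_def par_def)

lemma par_adj: assumes "x \<in> VV k - {0}"
  shows "x \<noteq> par k x \<and> (pos k x - pos k (par k x)) + (pos k (par k x) - pos k x) + lf k x + lf k (par k x) \<le> 1"
proof (cases "x \<le> 2*k+2")
  case True
  then show ?thesis using assms sp_facts[of x k] sp_facts[of "x-1" k] by (auto simp: par_def)
next
  case False
  then show ?thesis using assms leaf_facts[of x k] sp_facts[of "par k x" k] par_sp[of x k] by auto
qed

lemma DD_adj: assumes "x\<noteq>y" "(pos k x - pos k y) + (pos k y - pos k x) + lf k x + lf k y \<le> 1"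
  shows "DD k x v \<le> DD k y v + 1"
  using assms by (auto simp: DD_def)

lemma DD_lip: "EE k x y \<Longrightarrow> DD k x v \<le> DD k y v + 1"
proof -
  assume "EE k x y"
  then consider "x \<in> VV k - {0}" "y = par k x" | "y \<in> VV k - {0}" "x = par k y"
    unfolding EE_def by blast
  then show ?thesis
  proof cases
    case 1 then show ?thesis using par_adj[of x k] DD_adj[of x y k v] by auto
  next
    case 2
    have "(pos k x - pos k y) + (pos k y - pos k x) + lf k x + lf k y
        = (pos k y - pos k x) + (pos k x - pos k y) + lf k y + lf k x" by simp
    then show ?thesis using 2 par_adj[of y k] DD_adj[of x y k v] by auto
  qed
qed

lemma DD_desc:
  assumes u: "u \<in> VV k" and v: "v \<in> VV k" and uv: "u \<noteq> v"
  shows "\<exists>w. EE k u w \<and> DD k w v + 1 = DD k u v"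
proof -
  have pv: "pos k v \<le> 2*k+2" using pos_le v .
  show ?thesis
  proof (cases "u \<le> 2*k+2")
    case False
    then have uV: "u \<in> VV k - {0}" using u by auto
    then have "EE k u (par k u)" by (auto simp: EE_def)
    moreover have "DD k (par k u) v + 1 = DD k u v"
      using False uv pv leaf_facts[OF u False] sp_facts[of "par k u" k] par_sp[OF uV]
      by (auto simp: DD_def)
    ultimately show ?thesis by blast
  next
    case True
    note su = sp_facts[OF True]
    show ?thesis
    proof (cases "pos k v = u")
      case True2: True
      then have "v \<noteq> u" using uv by auto
      then have vl: "\<not> v \<le> 2*k+2" using True2 True by (auto simp: pos_def split: if_splits)
      note lv = leaf_facts[OF v vl]
      have "v \<in> VV k - {0}" using v vl by auto
      then have "EE k u v" using True2 lv by (auto simp: EE_def)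
      moreover have "DD k v v + 1 = DD k u v" using True2 su lv uv
        by (auto simp: DD_def)
      ultimately show ?thesis by blast
    next
      case False
      show ?thesis
      proof (cases "u < pos k v")
        case True3: True
        then have "Suc u \<in> VV k - {0}" using pv by (auto simp: VV_def)
        then have "EE k u (Suc u)" using True3 pv by (auto simp: EE_def par_def)
        moreover have "DD k (Suc u) v + 1 = DD k u v" using True3 su pv uv sp_facts[of "Suc u" k]
          by (auto simp: DD_def)
        ultimately show ?thesis by blast
      next
        case False3: False
        then have u0: "u \<noteq> 0" using False by auto
        then have "u \<in> VV k - {0}" using u by auto
        then have "EE k u (u - 1)" using True by (auto simp: EE_def par_def)
        moreover have "DD k (u - 1) v + 1 = DD k u v" using False3 False su pv uv u0 sp_facts[of "u - 1" k] True
          by (auto simp: DD_def)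
        ultimately show ?thesis by blast
      qed
    qed
  qed
qed

lemma DD0: "DD k v v = 0" by (simp add: DD_def)

lemma dist_EE: "u \<in> VV k \<Longrightarrow> v \<in> VV k \<Longrightarrow> dist (EE k) u v = DD k u v"
proof -
  assume u: "u \<in> VV k" and v: "v \<in> VV k"
  show ?thesis
  proof (rule dist_eq[where V="VV k"])
    show "\<exists>w. EE k x w \<and> DD k w v + 1 = DD k x v" if "x \<in> VV k" "x \<noteq> v" for x
      using DD_desc[OF that(1) v that(2)] .
    show "x \<in> VV k \<and> y \<in> VV k" if "EE k x y" for x y using EE_in[OF that] .
  qed (use u DD0 DD_lip in auto)
qed

lemma walk_EE: "u \<in> VV k \<Longrightarrow> v \<in> VV k \<Longrightarrow> \<exists>p. is_walk (EE k) p \<and> hd p = u \<and> last p = v"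
proof -
  assume u: "u \<in> VV k" and v: "v \<in> VV k"
  have "\<exists>p. is_walk (EE k) p \<and> hd p = u \<and> last p = v \<and> length p = Suc (DD k u v)"
  proof (rule walk_exists[where V="VV k"])
    show "\<exists>w. EE k x w \<and> DD k w v + 1 = DD k x v" if "x \<in> VV k" "x \<noteq> v" for x
      using DD_desc[OF that(1) v that(2)] .
    show "x \<in> VV k \<and> y \<in> VV k" if "EE k x y" for x y using EE_in[OF that] .
  qed (use u DD0 in auto)
  then show ?thesis by blast
qed

lemma card_VV: "card (VV k) = 3*k+3"
  by (simp add: VV_def)

lemma par_ne: "x \<in> VV k - {0} \<Longrightarrow> par k x \<noteq> x"
  using rk_par[of x k] by auto

lemma edge_set_EE: "edge_set (VV k) (EE k) = (\<lambda>x. {x, par k x}) ` (VV k - {0})"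
proof
  show "edge_set (VV k) (EE k) \<subseteq> (\<lambda>x. {x, par k x}) ` (VV k - {0})"
  proof
    fix e assume "e \<in> edge_set (VV k) (EE k)"
    then obtain u v where e: "e = {u, v}" "EE k u v" by (auto simp: edge_set_def)
    then consider "u \<in> VV k - {0}" "v = par k u" | "v \<in> VV k - {0}" "u = par k v"
      unfolding EE_def by blast
    then show "e \<in> (\<lambda>x. {x, par k x}) ` (VV k - {0})"
    proof cases
      case 1 then show ?thesis using e by (intro image_eqI[of _ _ u]) auto
    next
      case 2 then have "e = {v, par k v}" using e by auto
      then show ?thesis using 2 by auto
    qed
  qed
next
  show "(\<lambda>x. {x, par k x}) ` (VV k - {0}) \<subseteq> edge_set (VV k) (EE k)"
  proof
    fix e assume "e \<in> (\<lambda>x. {x, par k x}) ` (VV k - {0})"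
    then obtain x where x: "x \<in> VV k - {0}" "e = {x, par k x}" by blast
    then have "EE k x (par k x)" by (auto simp: EE_def)
    then show "e \<in> edge_set (VV k) (EE k)" using x par_in[OF x(1)] unfolding edge_set_def by blast
  qed
qed

lemma inj_edge: "inj_on (\<lambda>x. {x, par k x}) (VV k - {0})"
proof (rule inj_onI)
  fix x y assume x: "x \<in> VV k - {0}" and y: "y \<in> VV k - {0}" and eq: "{x, par k x} = {y, par k y}"
  show "x = y"
  proof (rule ccontr)
    assume "x \<noteq> y"
    then have "x = par k y" "y = par k x" using eq by (auto simp: doubleton_eq_iff)
    then show False using rk_par[OF x] rk_par[OF y] by auto
  qed
qed

lemma tree_EE: "is_tree (VV k) (EE k)"
  unfolding is_tree_def
proof (intro conjI)
  show "simple_graph (VV k) (EE k)"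
    unfolding simple_graph_def
  proof (intro conjI allI impI)
    show "finite (VV k)" by (simp add: VV_def)
    show "VV k \<noteq> {}" by (auto simp: VV_def)
  next
    fix u v assume "EE k u v" then show "u \<in> VV k" "v \<in> VV k" using EE_in by auto
  next
    fix u v assume "EE k u v" then show "EE k v u" by (auto simp: EE_def)
  next
    fix u show "\<not> EE k u u"
    proof
      assume "EE k u u"
      then have "u \<in> VV k - {0}" "par k u = u" unfolding EE_def by auto
      then show False using par_ne by blast
    qed
  qed
  show "connected_graph (VV k) (EE k)"
    unfolding connected_graph_def using walk_EE by blast
  have "card (edge_set (VV k) (EE k)) = card (VV k - {0})"
    unfolding edge_set_EE by (rule card_image[OF inj_edge])
  also have "\<dots> = card (VV k) - 1" by (simp add: VV_def)
  finally show "card (edge_set (VV k) (EE k)) = card (VV k) - 1" .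
qed

lemma radius_EE: "radius (VV k) (EE k) > k"
proof -
  have fin: "finite (VV k)" "VV k \<noteq> {}" by (auto simp: VV_def)
  have "eccentricity (VV k) (EE k) v > k" if v: "v \<in> VV k" for v
  proof -
    have N: "2*k+2 \<in> VV k" "0 \<in> VV k" by (auto simp: VV_def)
    have pv: "pos k v \<le> 2*k+2" using pos_le[OF v] .
    have spN: "pos k (2*k+2) = 2*k+2" "pos k 0 = 0" by (auto simp: pos_def)
    obtain w where w: "w \<in> VV k" "DD k v w > k"
    proof (cases "pos k v \<le> k+1")
      case True
      then have "v \<noteq> 2*k+2" using spN by auto
      then have "DD k v (2*k+2) > k" using True spN by (auto simp: DD_def)
      then show ?thesis using that N by blast
    next
      case False
      have "v \<noteq> 0"
      proof
        assume "v = 0" then show False using False spN by simp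
      qed
      then have "DD k v 0 > k" using False spN by (auto simp: DD_def)
      then show ?thesis using that N by blast
    qed
    have "dist (EE k) v w \<in> dist (EE k) v ` VV k" using w by auto
    then have "dist (EE k) v w \<le> eccentricity (VV k) (EE k) v"
      unfolding eccentricity_def using fin by (intro Max_ge) auto
    then show ?thesis using w dist_EE[OF v w(1)] by auto
  qed
  then show ?thesis unfolding radius_def using fin by (subst Min_gr_iff) auto
qed

definition pt :: "nat \<Rightarrow> nat \<Rightarrow> nat" where
  "pt k j = (if j = 0 then 0 else if j = k+1 then 2*k+2 else 2*k+2+j)"

lemma pt_in: "j \<le> k+1 \<Longrightarrow> pt k j \<in> VV k"
  by (auto simp: pt_def VV_def)

lemma pt_sep: "j < j' \<Longrightarrow> j' \<le> k+1 \<Longrightarrow>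
    (j = 0 \<and> j' = k+1) \<or> 2*(j'-j)+1 \<le> DD k (pt k j) (pt k j')"
  by (auto simp: pt_def DD_def pos_def lf_def)

lemma ball_card:
  assumes r1: "1 \<le> r" and rk: "r \<le> k"
  shows "card {j\<in>{..k+1}. DD k (pt k j) v \<le> r} \<le> r"
proof (cases "{j\<in>{..k+1}. DD k (pt k j) v \<le> r} = {}")
  case True then show ?thesis unfolding True by simp
next
  case False
  define J where "J = {j\<in>{..k+1}. DD k (pt k j) v \<le> r}"
  have fJ: "finite J" by (simp add: J_def)
  define a where "a = Min J"
  have aJ: "a \<in> J" using False fJ unfolding a_def J_def by (intro Min_in) auto
  have "J \<subseteq> {a..<a+r}"
  proof
    fix j assume jJ: "j \<in> J"
    have aj: "a \<le> j" using fJ jJ unfolding a_def by simp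
    show "j \<in> {a..<a+r}"
    proof (cases "a = j")
      case True then show ?thesis using r1 by simp
    next
      case False
      then have lt: "a < j" using aj by simp
      have j1: "j \<le> k+1" using jJ by (simp add: J_def)
      have "DD k (pt k a) (pt k j) \<le> DD k (pt k a) v + DD k v (pt k j)" by (rule DD_tri)
      also have "\<dots> \<le> 2*r" using aJ jJ DD_sym[of k v "pt k j"] by (simp add: J_def)
      finally have le: "DD k (pt k a) (pt k j) \<le> 2*r" .
      from pt_sep[OF lt j1] show ?thesis
      proof
        assume "a = 0 \<and> j = k+1"
        then have "DD k (pt k a) (pt k j) = 2*k+2" by (simp add: pt_def DD_def pos_def lf_def)
        then show ?thesis using le rk by simp
      next
        assume "2*(j-a)+1 \<le> DD k (pt k a) (pt k j)"
        then show ?thesis using le aj by simp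
      qed
    qed
  qed
  then have "card J \<le> card {a..<a+r}" by (intro card_mono) auto
  then show ?thesis by (simp add: J_def)
qed

lemma lower_bound:
  assumes dom: "dominating_k_broadcast (VV k) (EE k) k f"
  shows "k + 2 \<le> broadcast_cost (VV k) f"
proof -
  have fk: "\<And>v. v \<in> VV k \<Longrightarrow> f v \<le> k" using dom by (simp add: dominating_k_broadcast_def)
  have ex: "\<exists>v. v \<in> VV k \<and> 1 \<le> f v \<and> DD k (pt k j) v \<le> f v" if "j \<le> k+1" for j
  proof -
    have "pt k j \<in> VV k" using pt_in[OF that] .
    then obtain v where "v \<in> VV k" "1 \<le> f v" "dist (EE k) (pt k j) v \<le> f v"
      using dom by (auto simp: dominating_k_broadcast_def)
    then show ?thesis using dist_EE[OF \<open>pt k j \<in> VV k\<close>] by auto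
  qed
  define g where "g j = (SOME v. v \<in> VV k \<and> 1 \<le> f v \<and> DD k (pt k j) v \<le> f v)" for j
  have g: "g j \<in> VV k \<and> 1 \<le> f (g j) \<and> DD k (pt k j) (g j) \<le> f (g j)" if "j \<le> k+1" for j
    unfolding g_def using someI_ex[OF ex[OF that]] .
  have fin: "finite (VV k)" by (simp add: VV_def)
  have "k + 2 = card {..k+1}" by simp
  also have "\<dots> = (\<Sum>j\<in>{..k+1}. 1)" by simp
  also have "\<dots> = (\<Sum>v\<in>VV k. \<Sum>j\<in>{j. j \<in> {..k+1} \<and> g j = v}. 1)"
    by (rule sum.group[symmetric]) (use fin g in auto)
  also have "\<dots> \<le> (\<Sum>v\<in>VV k. f v)"
  proof (rule sum_mono)
    fix v assume v: "v \<in> VV k"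
    show "(\<Sum>j\<in>{j. j \<in> {..k+1} \<and> g j = v}. 1) \<le> f v"
    proof (cases "{j. j \<in> {..k+1} \<and> g j = v} = {}")
      case True then show ?thesis unfolding True by simp
    next
      case False
      then obtain j0 where "j0 \<le> k+1" "g j0 = v" by auto
      then have f1: "1 \<le> f v" using g by blast
      have "{j. j \<in> {..k+1} \<and> g j = v} \<subseteq> {j\<in>{..k+1}. DD k (pt k j) v \<le> f v}"
        using g by auto
      then have "card {j. j \<in> {..k+1} \<and> g j = v} \<le> card {j\<in>{..k+1}. DD k (pt k j) v \<le> f v}"
        by (intro card_mono) auto
      also have "\<dots> \<le> f v" by (rule ball_card[OF f1 fk[OF v]])
      finally show ?thesis by simp
    qed
  qed
  finally show ?thesis by (simp add: broadcast_cost_def)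
qed

definition fb :: "nat \<Rightarrow> nat \<Rightarrow> nat" where
  "fb k x = (if x = k+1 then k else 0) + (if x = 0 then 1 else 0) + (if x = 2*k+2 then 1 else 0)"

lemma upper_bound:
  assumes k1: "1 \<le> k"
  shows "dominating_k_broadcast (VV k) (EE k) k (fb k) \<and> broadcast_cost (VV k) (fb k) = k + 2"
proof
  have inV: "k+1 \<in> VV k" "0 \<in> VV k" "2*k+2 \<in> VV k" by (auto simp: VV_def)
  show "dominating_k_broadcast (VV k) (EE k) k (fb k)"
    unfolding dominating_k_broadcast_def
  proof (intro conjI ballI)
    fix v assume "v \<in> VV k" then show "fb k v \<le> k" using k1 by (auto simp: fb_def)
  next
    fix u assume u: "u \<in> VV k"
    show "\<exists>v\<in>VV k. 1 \<le> fb k v \<and> dist (EE k) u v \<le> fb k v"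
    proof (cases "u = 0 \<or> u = 2*k+2")
      case True
      then show ?thesis using u dist_EE[OF u u] DD0[of k u] by (intro bexI[of _ u]) (auto simp: fb_def)
    next
      case False
      have "DD k u (k+1) \<le> k" using False u k1 by (auto simp: DD_def pos_def lf_def VV_def)
      moreover have "fb k (k+1) = k" by (simp add: fb_def)
      ultimately show ?thesis using dist_EE[OF u inV(1)] k1 inV by (intro bexI[of _ "k+1"]) auto
    qed
  qed
  have fin: "finite (VV k)" by (simp add: VV_def)
  show "broadcast_cost (VV k) (fb k) = k + 2"
    unfolding broadcast_cost_def fb_def
    using inV fin by (simp add: sum.distrib)
qed

lemma bnum_EE: "1 \<le> k \<Longrightarrow> broadcast_number (VV k) (EE k) k = k + 2"
  unfolding broadcast_number_def
  by (rule Least_equality) (use upper_bound lower_bound in blast)+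

theorem proposition3:
  fixes k :: nat
  assumes "k \<ge> 3"
  shows "\<exists>(V :: nat set) E n. is_tree V E \<and> card V = n \<and> radius V E > k \<and>
           int (broadcast_number V E k) =
             \<lceil>(real (k + 2) / real (k + 1)) * (real n / 3)\<rceil>"
proof (intro exI conjI)
  show "is_tree (VV k) (EE k)" by (rule tree_EE)
  show "card (VV k) = 3*k+3" by (rule card_VV)
  show "radius (VV k) (EE k) > k" by (rule radius_EE)
  have "(real (k + 2) / real (k + 1)) * (real (3*k+3) / 3) = real (k+2)"
    by (simp add: field_simps)
  then show "int (broadcast_number (VV k) (EE k) k) =
             \<lceil>(real (k + 2) / real (k + 1)) * (real (3*k+3) / 3)\<rceil>"
  proof -
    have c: "\<lceil>real (k+2)\<rceil> = int (k+2)" by (rule ceiling_of_nat)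
    have "broadcast_number (VV k) (EE k) k = k + 2" using bnum_EE[of k] assms by simp
    then show ?thesis using c by (subst \<open>_ = real (k+2)\<close>) simp
  qed
qed

end
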